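(* Let $\mathcal{D}\subset\mathbb{R}^d$ be bounded and convex with non-empty interior. Assume $\mathcal{C}\subset\Gamma\backslash G$ is compact and $\theta>\overline\rho(\mathcal{C},\mathcal{D}\times(0,1])$. Then there is a constant $C_\theta<\infty$ such that $\mathcal{G}(M)\leq C_\theta$ for all $M$ with $\Gamma M\in\mathcal{C}D(\theta)^{-1}$.
   Context: Let $G=\operatorname{SL}(d+1,\mathbb{R})$ and $\Gamma=\operatorname{SL}(d+1,\mathbb{Z})$; vectors are row vectors and $\mathbb{Z}^{d+1}M$ is the lattice spanned by the rows of $M$. For $M\in G$, $t\in\mathcal{D}$: $F(M,t)=\min\{y>0\mid (x,y)\in\mathbb{Z}^{d+1}M,\ x+t\in\mathcal{D}\}$ ($x\in\mathbb{R}^d$, $y\in\mathbb{R}$), and $\infty$ if no minimum exists. $\mathcal{G}(M)$ is the number of distinct values the function $t\mapsto F(M,t)$ attains as $t$ runs over $\mathcal{D}$. For a bounded $\mathcal{A}\subset\mathbb{R}^{d+1}$ with non-empty interior, $\rho(M,\mathcal{A})=\inf\{\theta>0\mid \theta\mathcal{A}+\mathbb{Z}^{d+1}M=\mathbb{R}^{d+1}\}$, and for $\mathcal{C}\subset\Gamma\backslash G$, $\overline\rho(\mathcal{C},\mathcal{A})=\sup_{\Gamma M\in\mathcal{C}}\rho(M,\mathcal{A})$. For $\theta>0$, $D(\theta)=\operatorname{diag}(\theta,\ldots,\theta,\theta^{-d})\in G$, and $\mathcal{C}D(\theta)^{-1}=\{\Gamma MD(\theta)^{-1}\mid\Gamma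 M\in\mathcal{C}\}$. *)

theory Defs
  imports "HOL-Analysis.Analysis" "HOL-Library.Extended_Nat" "HOL-Library.Extended_Real"
begin

(* R^d = real^'n (d = CARD('n)); R^{d+1} = real^('n option), where the coordinate
   None is the last coordinate y and Some i are the x-coordinates. Vectors are row
   vectors: the lattice Z^{d+1} M is { v v* M | v integral }. *)

type_synonym 'n mat1 = "real ^ ('n option) ^ ('n option)"

definition SLR :: "('n::finite) mat1 set" where
  "SLR = {M. det M = 1}"

definition SLZ :: "('n::finite) mat1 set" where
  "SLZ = {g. (\<forall>i j. g $ i $ j \<in> \<int>) \<and> det g = 1}"

definition lattice :: "('n::finite) mat1 \<Rightarrow> (real ^ ('n option)) set" where
  "lattice M = {v v* M | v. \<forall>i. v $ i \<in> \<int>}"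

definition xpart :: "real ^ ('n::finite option) \<Rightarrow> real ^ 'n" where
  "xpart v = (\<chi> i. v $ Some i)"

definition ypart :: "real ^ ('n::finite option) \<Rightarrow> real" where
  "ypart v = v $ None"

definition coset :: "('n::finite) mat1 \<Rightarrow> ('n mat1) set" where
  "coset M = {g ** M | g. g \<in> SLZ}"

definition GammaG :: "('n::finite) mat1 set set" where
  "GammaG = coset ` SLR"

definition quot_top :: "('n::finite) mat1 set topology" where
  "quot_top = topology (\<lambda>U. U \<subseteq> GammaG \<and>
      openin (top_of_set SLR) {M \<in> SLR. coset M \<in> U})"

definition Ffun :: "(real ^ 'n) set \<Rightarrow> ('n::finite) mat1 \<Rightarrow> real ^ 'n \<Rightarrow> ereal" where
  "Ffun D M t = (let S = {y. y > 0 \<and> (\<exists>v \<in> lattice M. ypart v = y \<and> xpart v + t \<in> D)} in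
     if (\<exists>y \<in> S. \<forall>z \<in> S. y \<le> z) then ereal (LEAST y. y \<in> S) else \<infinity>)"

definition Gcount :: "(real ^ 'n) set \<Rightarrow> ('n::finite) mat1 \<Rightarrow> enat" where
  "Gcount D M = (if finite (Ffun D M ` D) then enat (card (Ffun D M ` D)) else \<infinity>)"

definition rho :: "('n::finite) mat1 \<Rightarrow> (real ^ ('n option)) set \<Rightarrow> ereal" where
  "rho M A = Inf (ereal ` {\<theta>. \<theta> > 0 \<and>
      {\<theta> *\<^sub>R a + l | a l. a \<in> A \<and> l \<in> lattice M} = UNIV})"

definition rho_bar :: "('n::finite) mat1 set set \<Rightarrow> (real ^ ('n option)) set \<Rightarrow> ereal" where
  "rho_bar C A = (SUP M \<in> {M \<in> SLR. coset M \<in> C}. rho M A)"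

definition Dmat :: "real \<Rightarrow> ('n::finite) mat1" where
  "Dmat \<theta> = (\<chi> i j. if i = j then (if i = None then inverse (\<theta> ^ CARD('n)) else \<theta>) else 0)"

definition translate_set :: "('n::finite) mat1 set set \<Rightarrow> real \<Rightarrow> ('n mat1) set set" where
  "translate_set C \<theta> = {coset (M ** matrix_inv (Dmat \<theta>)) | M. M \<in> SLR \<and> coset M \<in> C}"

definition cyl :: "(real ^ 'n) set \<Rightarrow> (real ^ ('n::finite option)) set" where
  "cyl D = {v. xpart v \<in> D \<and> 0 < ypart v \<and> ypart v \<le> 1}"

end

theory Submission
  imports Defs "HOL-Library.Countable"
begin


instantiation option :: (countable) wellorder
begin
definition less_eq_option :: "'a option \<Rightarrow> 'a option \<Rightarrow> bool" where
  "less_eq_option x y \<longleftrightarrow> to_nat x \<le> to_nat y"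
definition less_option :: "'a option \<Rightarrow> 'a option \<Rightarrow> bool" where
  "less_option x y \<longleftrightarrow> to_nat x < to_nat y"
instance
proof
  fix P :: "'a option \<Rightarrow> bool" and a :: "'a option"
  assume step: "\<And>x. (\<And>y. y < x \<Longrightarrow> P y) \<Longrightarrow> P x"
  have "\<forall>x. to_nat x = n \<longrightarrow> P x" for n
  proof (induction n rule: less_induct)
    case (less n)
    show ?case using step less less_option_def by metis
  qed
  then show "P a" by blast
qed (auto simp: less_eq_option_def less_option_def)
end

lemma half_cube:
  fixes H :: "(real^'m::finite) set"
  defines "H \<equiv> {v. \<forall>i. 0 \<le> v$i \<and> v$i < 1}"
  shows "H \<in> lmeasurable" "measure lebesgue H = 1" "bounded H"
proof -
  have sub1: "box 0 One \<subseteq> H" and sub2: "H \<subseteq> cbox 0 One"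
    by (auto simp: H_def mem_box_cart less_imp_le one_index Cart_1[symmetric])
  show "bounded H" using sub2 bounded_cbox bounded_subset by blast
  have "convex H" unfolding H_def convex_def by (auto intro: convex_bound_lt add_nonneg_nonneg)
  then show Hm: "H \<in> lmeasurable" using measurable_convex \<open>bounded H\<close> by blast
  have "measure lebesgue (cbox 0 (One::real^'m)) = 1"
    by (simp add: measure_completion)
  moreover have "measure lebesgue (box 0 (One::real^'m)) = 1"
    by (simp add: measure_completion)
  ultimately show "measure lebesgue H = 1"
    using measure_mono_fmeasurable[OF sub1] measure_mono_fmeasurable[OF sub2] Hm
    by (metis antisym fmeasurableD lmeasurable_cbox sets_completionI_sets sets_lborel open_box borel_open)
qed


definition glat :: "real^'m::finite^'m \<Rightarrow> (real^'m) set" where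
  "glat M = {v v* M | v. \<forall>i. v$i \<in> \<int>}"

lemma lattice_glat: "lattice M = glat M"
  by (simp add: lattice_def glat_def)

lemma vm_diff: "(x - y) v* (A::real^'m::finite^'k::finite) = x v* A - y v* A"
  by (simp add: vec_eq_iff vector_matrix_mult_def sum_subtractf algebra_simps)

lemma vm_neg: "(- x) v* (A::real^'m::finite^'k::finite) = - (x v* A)"
  by (simp add: vec_eq_iff vector_matrix_mult_def sum_negf)

lemma vm_scale: "(c *\<^sub>R x) v* (A::real^'m::finite^'k::finite) = c *\<^sub>R (x v* A)"
  by (simp add: vec_eq_iff vector_matrix_mult_def sum_distrib_left algebra_simps)

lemma lattice_diff:
  assumes "a \<in> glat M" "b \<in> glat M" shows "a - b \<in> glat M"
proof -
  obtain v w where v: "a = v v* M" "\<forall>i. v$i \<in> \<int>" and w: "b = w v* M" "\<forall>i. w$i \<in> \<int>"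
    using assms unfolding glat_def by blast
  have "a - b = (v - w) v* M" using v w by (simp add: vm_diff)
  moreover have "\<forall>i. (v - w)$i \<in> \<int>" using v w by simp
  ultimately show ?thesis unfolding glat_def by blast
qed

lemma lattice_zero: "0 \<in> glat (M::real^'m::finite^'m)"
proof -
  have "0 = (0::real^_) v* M" "\<forall>i. (0::real^'m)$i \<in> \<int>" by simp_all
  then show ?thesis unfolding glat_def by blast
qed

lemma lattice_neg: "a \<in> glat M \<Longrightarrow> - a \<in> glat M"
  using lattice_diff[OF lattice_zero, of a M] by simp

lemma int_vm:
  assumes "\<forall>i. v$i \<in> \<int>" "\<forall>i j. g$i$j \<in> \<int>"
  shows "\<forall>j. (v v* (g::real^'m::finite^'k::finite))$j \<in> \<int>"
  using assms by (auto simp: vector_matrix_mult_def intro!: Ints_sum Ints_mult)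

lemma lattice_mult_sub:
  assumes "\<forall>i j. g$i$j \<in> \<int>"
  shows "glat (g ** X) \<subseteq> glat X"
proof
  fix a assume "a \<in> glat (g ** X)"
  then obtain v where v: "a = v v* (g ** X)" "\<forall>i. v$i \<in> \<int>" unfolding glat_def by blast
  then have "a = (v v* g) v* X" by (simp add: vector_matrix_mul_assoc)
  moreover have "\<forall>j. (v v* g)$j \<in> \<int>" using int_vm v(2) assms by blast
  ultimately show "a \<in> glat X" unfolding glat_def by blast
qed

lemma finite_int_bounded:
  fixes W :: "(real^'m::finite) set"
  assumes "bounded W"
  shows "finite {v\<in>W. \<forall>i. v$i \<in> \<int>}"
proof -
  obtain r where r: "\<forall>v\<in>W. norm v \<le> r" using assms bounded_iff by blast
  let ?B = "of_int ` {-\<lceil>r\<rceil>..\<lceil>r\<rceil>} :: real set"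
  have "{v\<in>W. \<forall>i. v$i \<in> \<int>} \<subseteq> (\<lambda>f. \<chi> i. f i) ` (PiE UNIV (\<lambda>_. ?B))"
  proof
    fix v assume v: "v \<in> {v\<in>W. \<forall>i. v$i \<in> \<int>}"
    have "v$i \<in> ?B" for i
    proof -
      obtain k where k: "v$i = of_int k" using v Ints_cases by blast
      have "\<bar>v$i\<bar> \<le> r" using r v component_le_norm_cart order_trans by blast
      then have "real_of_int \<bar>k\<bar> \<le> r" using k by simp
      then have "\<bar>k\<bar> \<le> \<lceil>r\<rceil>" by (metis ceiling_mono ceiling_of_int)
      then show ?thesis using k by (intro image_eqI[of _ _ k]) (auto simp: abs_le_iff)
    qed
    then have "(\<lambda>i. v$i) \<in> PiE UNIV (\<lambda>_. ?B)" by auto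
    moreover have "v = (\<chi> i. (\<lambda>i. v$i) i)" by simp
    ultimately show "v \<in> (\<lambda>f. \<chi> i. f i) ` (PiE UNIV (\<lambda>_. ?B))" by blast
  qed
  moreover have "finite (PiE (UNIV::'m set) (\<lambda>_. ?B))" by (intro finite_PiE) auto
  ultimately show ?thesis using finite_subset by blast
qed

lemma vm_inv:
  assumes "det (M::real^'m::finite^'m) \<noteq> 0"
  obtains N where "\<And>x. (x v* M) v* N = x"
proof -
  obtain N where "M ** N = mat 1" using assms invertible_det_nz invertible_def by blast
  then have "\<And>x. (x v* M) v* N = x" by (simp add: vector_matrix_mul_assoc)
  then show ?thesis using that by blast
qed

lemma bl_vm: "bounded_linear (\<lambda>x. x v* (N::real^'m::finite^'k::finite))"
proof -
  have "(\<lambda>x. x v* N) = (\<lambda>x. transpose N *v x)" by simp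
  then show ?thesis using matrix_vector_mul_bounded_linear by metis
qed

lemma finite_lattice:
  assumes "det (M::real^'m::finite^'m) \<noteq> 0" "bounded S"
  shows "finite (glat M \<inter> S)"
proof -
  obtain N where N: "\<And>x. (x v* M) v* N = x" using vm_inv assms(1) by blast
  let ?W = "(\<lambda>x. x v* N) ` S"
  have "bounded ?W" using bounded_linear_image[OF assms(2) bl_vm] .
  then have fin: "finite {v\<in>?W. \<forall>i. v$i \<in> \<int>}" by (rule finite_int_bounded)
  have "glat M \<inter> S \<subseteq> (\<lambda>v. v v* M) ` {v\<in>?W. \<forall>i. v$i \<in> \<int>}"
  proof
    fix a assume a: "a \<in> glat M \<inter> S"
    then obtain v where v: "a = v v* M" "\<forall>i. v$i \<in> \<int>" unfolding glat_def by blast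
    have "v = a v* N" using N v by simp
    then have "v \<in> ?W" using a by blast
    then show "a \<in> (\<lambda>v. v v* M) ` {v\<in>?W. \<forall>i. v$i \<in> \<int>}" using v by blast
  qed
  then show ?thesis using fin finite_subset by blast
qed


lemma counting:
  fixes M :: "real^'m::{finite,wellorder}^'m::_" and K T :: "(real^'m::_) set" and P
  assumes detM: "det M = 1"
    and cover: "\<forall>z. \<exists>k\<in>K. \<exists>l\<in>glat M. z = k + l"
    and P: "finite P" "P \<subseteq> glat M"
    and PK: "\<forall>p\<in>P. \<forall>k\<in>K. p + k \<in> T"
    and T: "T \<in> lmeasurable" "bounded T"
  shows "real (card P) \<le> measure lebesgue T"
proof -
  define H where "H = {v::real^'m::_. \<forall>i. 0 \<le> v$i \<and> v$i < 1}"
  define Q where "Q = (\<lambda>v. v v* M) ` H"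
  have Hm: "H \<in> lmeasurable" "measure lebesgue H = 1" "bounded H"
    using half_cube unfolding H_def by blast+
  have feq: "(\<lambda>v. v v* M) = (*v) (transpose M)" by (simp add: fun_eq_iff)
  have lin: "linear (\<lambda>v. v v* M)" unfolding feq by simp
  have Qm: "Q \<in> lmeasurable" unfolding Q_def using measurable_linear_image[OF lin Hm(1)] .
  have "measure lebesgue Q = \<bar>det (matrix (\<lambda>v. v v* M))\<bar> * measure lebesgue H"
    unfolding Q_def using measure_linear_image[OF lin Hm(1)] .
  also have "\<dots> = 1" unfolding feq matrix_of_matrix_vector_mul using detM Hm(2)
    by (simp add: det_transpose)
  finally have Qmeas: "measure lebesgue Q = 1" .
  have Qb: "bounded Q" unfolding Q_def using bounded_linear_image[OF Hm(3) bl_vm] .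
  obtain N where N: "\<And>x. (x v* M) v* N = x" using vm_inv[of M] detM by auto
  have disj: "l = l'" if hx: "x \<in> Q" "x' \<in> Q" "l \<in> glat M" "l' \<in> glat M" "x + l = x' + l'"
    for x x' l l'
  proof -
    obtain u u' where u: "x = u v* M" "u \<in> H" and u': "x' = u' v* M" "u' \<in> H"
      using hx(1,2) unfolding Q_def by blast
    obtain v v' where v: "l = v v* M" "\<forall>i. v$i \<in> \<int>" and v': "l' = v' v* M" "\<forall>i. v'$i \<in> \<int>"
      using hx(3,4) unfolding glat_def by blast
    have "(u + v) v* M = (u' + v') v* M"
      using hx(5) u u' v v' by (simp add: vector_matrix_left_distrib)
    then have e: "u + v = u' + v'" using N by metis
    have "v$i = v'$i" for i
    proof -
      have "u$i - u'$i = v'$i - v$i" using e by (simp add: vec_eq_iff algebra_simps)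
      moreover have "v'$i - v$i \<in> \<int>" using v v' by simp
      moreover have "\<bar>u$i - u'$i\<bar> < 1" proof -
        have "0 \<le> u$i" "u$i < 1" "0 \<le> u'$i" "u'$i < 1" using u u' unfolding H_def by auto
        then show ?thesis by linarith
      qed
      ultimately show ?thesis using Ints_nonzero_abs_less1 by fastforce
    qed
    then show "l = l'" using v v' by (metis vec_eq_iff)
  qed
  define Z where "Z = glat M \<inter> {l. \<exists>x\<in>Q. x + l \<in> T}"
  have "{l. \<exists>x\<in>Q. x + l \<in> T} \<subseteq> (\<Union>t\<in>T. \<Union>x\<in>Q. {t - x})"
    by (auto simp: algebra_simps)
  then have "bounded {l. \<exists>x\<in>Q. x + l \<in> T}"
    using bounded_differences[OF T(2) Qb] bounded_subset by blast
  then have Zfin: "finite Z" unfolding Z_def using finite_lattice[of M] detM by simp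
  define U where "U l = {x\<in>Q. x + l \<in> T}" for l
  have Ueq: "U l = Q \<inter> (+) (- l) ` T" for l
    unfolding U_def by (auto simp: image_iff) (metis add.commute diff_add_cancel uminus_add_conv_diff)
  have Um: "U l \<in> lmeasurable" for l
  proof -
    have "(+) (- l) ` T \<in> sets lebesgue" using fmeasurableD[OF measurable_translation[OF T(1), of "-l"]] .
    then show ?thesis unfolding Ueq by (rule fmeasurable_Int_fmeasurable[OF Qm])
  qed
  define V where "V l = (+) l ` U l" for l
  have Vm: "V l \<in> lmeasurable" for l unfolding V_def using measurable_translation[OF Um] .
  have Vmeas: "measure lebesgue (V l) = measure lebesgue (U l)" for l
    unfolding V_def by (rule measure_translation)
  have VT: "(\<Union>l\<in>Z. V l) \<subseteq> T" unfolding V_def U_def by (auto simp: add.commute)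
  have "(\<Sum>l\<in>Z. measure lebesgue (U l)) = measure lebesgue (\<Union>l\<in>Z. V l)"
  proof -
    have "pairwise (\<lambda>i j. disjnt (V i) (V j)) Z"
      unfolding pairwise_def disjnt_def V_def U_def Z_def
      using disj by (auto simp: add.commute)
    then show ?thesis using measure_UNION'[OF Zfin, of V lebesgue] Vm Vmeas by simp
  qed
  also have "\<dots> \<le> measure lebesgue T"
  proof (rule measure_mono_fmeasurable[OF VT _ T(1)])
    show "(\<Union>l\<in>Z. V l) \<in> sets lebesgue"
      using Zfin Vm by (intro sets.finite_UN) (auto simp: fmeasurableD)
  qed
  finally have A: "(\<Sum>l\<in>Z. measure lebesgue (U l)) \<le> measure lebesgue T" .
  have intU: "integrable lebesgue (indicat_real (U l))" for l
    using Um[of l] by (intro integrable_real_indicator) (auto simp: fmeasurable_def)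
  have intQ: "integrable lebesgue (indicat_real Q)"
    using Qm by (intro integrable_real_indicator) (auto simp: fmeasurable_def)
  have pw: "real (card P) * indicator Q x \<le> (\<Sum>l\<in>Z. indicator (U l) x)" for x
  proof (cases "x \<in> Q")
    case True
    obtain k l0 where k: "k \<in> K" "l0 \<in> glat M" "x = k + l0" using cover by blast
    have sub: "(\<lambda>p. p - l0) ` P \<subseteq> {l\<in>Z. x \<in> U l}"
    proof
      fix l assume "l \<in> (\<lambda>p. p - l0) ` P"
      then obtain p where p: "p \<in> P" "l = p - l0" by blast
      have "x + l = p + k" using p k by (simp add: algebra_simps)
      then have "x + l \<in> T" using PK p k by (metis add.commute)
      moreover have "l \<in> glat M" using p P k lattice_diff by blast
      ultimately show "l \<in> {l\<in>Z. x \<in> U l}" using True unfolding Z_def U_def by blast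
    qed
    have inj: "inj_on (\<lambda>p. p - l0) P" by (simp add: inj_on_def)
    have "finite {l\<in>Z. x \<in> U l}" using Zfin by simp
    then have "card P \<le> card {l\<in>Z. x \<in> U l}"
      using card_inj_on_le[OF inj sub] by blast
    moreover have "(\<Sum>l\<in>Z. indicator (U l) x) = real (card {l\<in>Z. x \<in> U l})"
      using Zfin by (simp add: indicator_def sum.inter_filter[symmetric] Int_def)
    ultimately show ?thesis using True by simp
  next
    case False
    then show ?thesis by (simp add: sum_nonneg)
  qed
  have "real (card P) = integral\<^sup>L lebesgue (\<lambda>x. real (card P) * indicator Q x)"
    using Qmeas by simp
  also have "\<dots> \<le> integral\<^sup>L lebesgue (\<lambda>x. \<Sum>l\<in>Z. indicator (U l) x)"
    using pw intQ intU by (intro integral_mono) auto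
  also have "\<dots> = (\<Sum>l\<in>Z. measure lebesgue (U l))"
    using Bochner_Integration.integral_sum[where I=Z and M=lebesgue and f="\<lambda>l. indicat_real (U l)"] intU by (simp add: integral_indicator)
  finally show ?thesis using A by linarith
qed


lemma vm_Dmat:
  fixes a :: "real^('n::finite option)"
  shows "(a v* Dmat c) $ i = a $ i * (if i = None then inverse (c ^ CARD('n)) else c)"
  by (simp add: Dmat_def vector_matrix_mult_def if_distrib cong: if_cong)

lemma diag_mul:
  "((\<chi> i j. if i = j then f i else 0) :: real^'m::finite^'m) ** (\<chi> i j. if i = j then g i else 0)
   = (\<chi> i j. if i = j then f i * g i else 0)"
proof -
  have "(\<Sum>k\<in>UNIV. (if i = k then f i else 0) * (if k = j then g k else 0)) =
        (if i = j then f i * g i else 0)" for i j :: 'm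
  proof -
    have "(\<Sum>k\<in>UNIV. (if i = k then f i else 0) * (if k = j then g k else 0)) =
          (\<Sum>k\<in>UNIV. if k = i then f i * (if k = j then g k else 0) else 0)"
      by (rule sum.cong) auto
    also have "\<dots> = f i * (if i = j then g i else 0)" by simp
    finally show ?thesis by simp
  qed
  then show ?thesis by (simp add: vec_eq_iff matrix_matrix_mult_def)
qed

lemma Dmat_diag: "(Dmat c :: ('n::finite) mat1) =
   (\<chi> i j. if i = j then (if i = None then inverse (c ^ CARD('n)) else c) else 0)"
  by (simp add: Dmat_def)

lemma Dmat_mul:
  assumes "c \<noteq> 0"
  shows "(Dmat c :: ('n::finite) mat1) ** Dmat (inverse c) = mat 1"
  unfolding Dmat_diag diag_mul using assms
  by (simp add: vec_eq_iff mat_def power_inverse)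

lemma matrix_inv_Dmat:
  assumes "c \<noteq> 0"
  shows "matrix_inv (Dmat c :: ('n::finite) mat1) = Dmat (inverse c)"
proof -
  let ?A = "Dmat c :: 'n mat1" and ?B = "Dmat (inverse c) :: 'n mat1"
  have AB: "?A ** ?B = mat 1" using Dmat_mul[OF assms] .
  have BA: "?B ** ?A = mat 1" using Dmat_mul[of "inverse c"] assms by simp
  show ?thesis unfolding matrix_inv_def
  proof (rule some_equality)
    show "?A ** ?B = mat 1 \<and> ?B ** ?A = mat 1" using AB BA by simp
    fix B' assume h: "?A ** B' = mat 1 \<and> B' ** ?A = mat 1"
    have "B' = B' ** (?A ** ?B)" using AB by simp
    also have "\<dots> = (B' ** ?A) ** ?B" by (simp add: matrix_mul_assoc)
    also have "\<dots> = ?B" using h by simp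
    finally show "B' = ?B" .
  qed
qed


lemma mat1_SLZ: "(mat 1 :: ('n::finite) mat1) \<in> SLZ"
  unfolding SLZ_def by (auto simp: det_I) (auto simp: mat_def)

lemma coset_self: "M \<in> coset M"
proof -
  have "M = mat 1 ** M" by simp
  then show ?thesis unfolding coset_def using mat1_SLZ by blast
qed

lemma glat_coset:
  assumes "coset M = coset X"
  shows "glat M = glat X"
proof
  have "M \<in> coset X" using assms coset_self by blast
  then obtain g where "M = g ** X" "g \<in> SLZ" unfolding coset_def by blast
  then show "glat M \<subseteq> glat X" using lattice_mult_sub[of g X] unfolding SLZ_def by blast
next
  have "X \<in> coset M" using assms coset_self by blast
  then obtain g where "X = g ** M" "g \<in> SLZ" unfolding coset_def by blast
  then show "glat X \<subseteq> glat M" using lattice_mult_sub[of g M] unfolding SLZ_def by blast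
qed

lemma xpart_add: "xpart (a + b) = xpart a + xpart b"
  by (simp add: xpart_def vec_eq_iff)
lemma xpart_neg: "xpart (- a) = - xpart a"
  by (simp add: xpart_def vec_eq_iff)
lemma xpart_diff: "xpart (a - b) = xpart a - xpart b"
  by (simp add: xpart_def vec_eq_iff)
lemma xpart_scale: "xpart (c *\<^sub>R a) = c *\<^sub>R xpart a"
  by (simp add: xpart_def vec_eq_iff)
lemma ypart_simps: "ypart (a + b) = ypart a + ypart b" "ypart (- a) = - ypart a"
   "ypart (a - b) = ypart a - ypart b" "ypart (c *\<^sub>R a) = c * ypart a"
  by (simp_all add: ypart_def)

lemma xpart_Di:
  assumes "\<theta> > 0"
  shows "xpart (a v* (Dmat (inverse \<theta>) :: ('n::finite) mat1)) = inverse \<theta> *\<^sub>R xpart a"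
  by (simp add: xpart_def vec_eq_iff vm_Dmat mult.commute)

lemma ypart_Di:
  assumes "\<theta> > 0"
  shows "ypart (a v* (Dmat (inverse \<theta>) :: ('n::finite) mat1)) = ypart a * \<theta> ^ CARD('n)"
  by (simp add: ypart_def vm_Dmat power_inverse)


theorem proposition2p4:
  fixes D :: "(real ^ 'n::finite) set"
    and C :: "('n mat1) set set"
    and \<theta> :: real
  assumes "bounded D" and "convex D" and "interior D \<noteq> {}"
    and "C \<subseteq> GammaG" and "compactin quot_top C"
    and "\<theta> > 0"
    and "ereal \<theta> > rho_bar C (cyl D)"
  shows "\<exists>C\<^sub>\<theta>::nat. \<forall>M. M \<in> SLR \<and> coset M \<in> translate_set C \<theta> \<longrightarrow> Gcount D M \<le> enat C\<^sub>\<theta>"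
proof -
  note th = \<open>\<theta> > 0\<close>
  define d where "d = CARD('n)"
  obtain R where R: "R > 0" "\<forall>x\<in>D. norm x \<le> R" using assms(1) bounded_pos by auto
  define Yb where "Yb = \<theta> * \<theta> ^ d"
  have Yb0: "Yb > 0" unfolding Yb_def using th by simp
  define c where "c = 3 * R + 2 * Yb"
  define T :: "(real^('n option)) set" where "T = cbox (- (\<chi> i. c)) (\<chi> i. c)"
  have Tm: "T \<in> lmeasurable" "bounded T" unfolding T_def by auto
  have memT: "v \<in> T \<longleftrightarrow> (\<forall>i. \<bar>v$i\<bar> \<le> c)" for v
    unfolding T_def mem_box_cart by (auto simp: abs_le_iff) (metis minus_le_iff)+
  show ?thesis
  proof (intro exI[of _ "nat \<lceil>measure lebesgue T\<rceil>"] allI impI)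
    fix M :: "'n mat1" assume hM: "M \<in> SLR \<and> coset M \<in> translate_set C \<theta>"
    have detM: "det M = 1" using hM SLR_def by auto
    obtain M0 where M0: "coset M = coset (M0 ** matrix_inv (Dmat \<theta>))" "M0 \<in> SLR" "coset M0 \<in> C"
      using hM unfolding translate_set_def by blast
    define Di where "Di = (Dmat (inverse \<theta>) :: 'n mat1)"
    have invD: "matrix_inv (Dmat \<theta> :: 'n mat1) = Di" unfolding Di_def by (rule matrix_inv_Dmat) (use th in simp)
    have DDi: "(Dmat \<theta> :: 'n mat1) ** Di = mat 1" unfolding Di_def by (rule Dmat_mul) (use th in simp)
    have latM: "glat M = glat (M0 ** Di)" using glat_coset M0(1) invD by simp
    have "rho M0 (cyl D) \<le> rho_bar C (cyl D)"
      unfolding rho_bar_def using M0(2,3) by (intro SUP_upper) auto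
    then have "rho M0 (cyl D) < ereal \<theta>" using assms(7) by simp
    then obtain \<theta>1 where t1: "\<theta>1 > 0" "\<theta>1 < \<theta>"
      and cov0: "{\<theta>1 *\<^sub>R a + l | a l. a \<in> cyl D \<and> l \<in> lattice M0} = UNIV"
      unfolding rho_def Inf_less_iff by auto
    define lam where "lam = \<theta>1 / \<theta>"
    have lam: "0 < lam" "lam < 1" unfolding lam_def using t1 th by auto
    have cover: "\<exists>a\<in>cyl D. \<exists>l\<in>glat M. z = \<theta>1 *\<^sub>R (a v* Di) + l" for z
    proof -
      have "z v* Dmat \<theta> \<in> {\<theta>1 *\<^sub>R a + l | a l. a \<in> cyl D \<and> l \<in> lattice M0}" using cov0 by simp
      then obtain a l0 where al: "a \<in> cyl D" "l0 \<in> lattice M0" "z v* Dmat \<theta> = \<theta>1 *\<^sub>R a + l0" by blast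
      have "z = (z v* Dmat \<theta>) v* Di" using DDi by (simp add: vector_matrix_mul_assoc)
      also have "\<dots> = \<theta>1 *\<^sub>R (a v* Di) + l0 v* Di"
        using al(3) by (simp add: vector_matrix_left_distrib vm_scale)
      finally have z: "z = \<theta>1 *\<^sub>R (a v* Di) + l0 v* Di" .
      obtain w where w: "l0 = w v* M0" "\<forall>i. w$i \<in> \<int>" using al(2) unfolding lattice_def by blast
      have "l0 v* Di = w v* (M0 ** Di)" using w by (simp add: vector_matrix_mul_assoc)
      then have "l0 v* Di \<in> glat (M0 ** Di)" unfolding glat_def using w(2) by blast
      then have "l0 v* Di \<in> glat M" using latM by simp
      then show ?thesis using al(1) z by blast
    qed
    have xk: "xpart (\<theta>1 *\<^sub>R (a v* Di)) = lam *\<^sub>R xpart a" for a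
      unfolding Di_def xpart_scale xpart_Di[OF th] lam_def by (simp add: divide_inverse)
    have yk: "ypart (\<theta>1 *\<^sub>R (a v* Di)) = \<theta>1 * \<theta> ^ d * ypart a" for a
      unfolding Di_def ypart_simps ypart_Di[OF th] d_def by simp
    define K where "K = {\<theta>1 *\<^sub>R (a v* Di) | a. a \<in> cyl D}"
    have Kb: "norm (xpart k) \<le> R \<and> 0 < ypart k \<and> ypart k \<le> Yb" if hk: "k \<in> K" for k
    proof -
      obtain a where a: "a \<in> cyl D" "k = \<theta>1 *\<^sub>R (a v* Di)" using hk K_def by blast
      have a': "xpart a \<in> D" "0 < ypart a" "ypart a \<le> 1" using a(1) cyl_def by auto
      have "norm (xpart k) = lam * norm (xpart a)" using a xk lam by simp
      also have "\<dots> \<le> 1 * R" using lam R a' by (intro mult_mono) auto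
      finally have 1: "norm (xpart k) \<le> R" by simp
      have 2: "ypart k = \<theta>1 * \<theta> ^ d * ypart a" using a yk by simp
      have "\<theta>1 * \<theta> ^ d * ypart a \<le> \<theta> * \<theta> ^ d * 1"
        using t1 th a' by (intro mult_mono) auto
      then show ?thesis using 1 2 t1 th a' unfolding Yb_def by simp
    qed
    define V where "V = glat M \<inter> {v. 0 < ypart v \<and> ypart v \<le> Yb \<and> (\<exists>t\<in>D. xpart v + t \<in> D)}"
    have Vx: "norm (xpart v) \<le> 2 * R" if hv: "v \<in> V" for v
    proof -
      obtain t where t: "t \<in> D" "xpart v + t \<in> D" using hv V_def by blast
      have "norm (xpart v) = norm ((xpart v + t) - t)" by simp
      also have "\<dots> \<le> norm (xpart v + t) + norm t" by (rule norm_triangle_ineq4)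
      also have "\<dots> \<le> 2 * R"
      proof -
        have "norm (xpart v + t) \<le> R" "norm t \<le> R" using R(2) t by auto
        then show ?thesis by linarith
      qed
      finally show ?thesis .
    qed
    have comp: "\<bar>v $ i\<bar> \<le> (case i of None \<Rightarrow> \<bar>ypart v\<bar> | Some j \<Rightarrow> norm (xpart v))" for v i
    proof (cases i)
      case None then show ?thesis by (simp add: ypart_def)
    next
      case (Some j)
      have "v $ Some j = xpart v $ j" by (simp add: xpart_def)
      then show ?thesis using Some component_le_norm_cart by (metis option.simps(5))
    qed
    have VT: "V \<subseteq> T"
    proof
      fix v assume v: "v \<in> V"
      have "\<bar>v $ i\<bar> \<le> c" for i
      proof (cases i)
        case None then show ?thesis using comp[of v i] v R Yb0 unfolding V_def c_def by auto
      next
        case (Some j) then show ?thesis using comp[of v i] Vx[OF v] R Yb0 unfolding c_def by auto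
      qed
      then show "v \<in> T" using memT by blast
    qed
    have Vfin: "finite V"
    proof -
      have "finite (glat M \<inter> T)" using finite_lattice[of M T] detM Tm by simp
      moreover have "V \<subseteq> glat M \<inter> T" using VT V_def by blast
      ultimately show ?thesis using finite_subset by blast
    qed
    have PK: "\<forall>p\<in>V. \<forall>k\<in>K. p + k \<in> T"
    proof (intro ballI)
      fix p k assume p: "p \<in> V" and k: "k \<in> K"
      have "\<bar>(p + k) $ i\<bar> \<le> c" for i
      proof (cases i)
        case None
        have "\<bar>(p + k) $ i\<bar> \<le> \<bar>ypart p\<bar> + \<bar>ypart k\<bar>" using None by (simp add: ypart_def abs_triangle_ineq)
        then show ?thesis using Kb[OF k] p R Yb0 unfolding V_def c_def by auto
      next
        case (Some j)
        have "\<bar>(p + k) $ i\<bar> \<le> norm (xpart (p + k))" using comp[of "p+k" i] Some by simp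
        also have "\<dots> \<le> norm (xpart p) + norm (xpart k)" unfolding xpart_add by (rule norm_triangle_ineq)
        finally show ?thesis using Kb[OF k] Vx[OF p] Yb0 unfolding c_def by auto
      qed
      then show "p + k \<in> T" using memT by blast
    qed
    have coverK: "\<forall>z. \<exists>k\<in>K. \<exists>l\<in>glat M. z = k + l"
      using cover unfolding K_def by blast
    have cardV: "real (card V) \<le> measure lebesgue T"
      by (rule counting[OF detM coverK Vfin _ PK Tm]) (auto simp: V_def)
    have exist: "\<exists>v\<in>glat M. 0 < ypart v \<and> ypart v \<le> Yb \<and> xpart v + t \<in> D" if t: "t \<in> D" for t
    proof -
      define z :: "real^('n option)" where "z = (\<chi> i. case i of None \<Rightarrow> 0 | Some j \<Rightarrow> lam * t$j)"
      obtain a l where al: "a \<in> cyl D" "l \<in> glat M" "z = \<theta>1 *\<^sub>R (a v* Di) + l" using cover by blast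
      define v where "v = - l"
      have vl: "v \<in> glat M" unfolding v_def using lattice_neg al(2) by blast
      have veq: "v = \<theta>1 *\<^sub>R (a v* Di) - z" using al(3) unfolding v_def by (simp add: algebra_simps)
      have a': "xpart a \<in> D" "0 < ypart a" "ypart a \<le> 1" using al(1) cyl_def by auto
      have xz: "xpart z = lam *\<^sub>R t" by (simp add: z_def xpart_def vec_eq_iff)
      have yz: "ypart z = 0" by (simp add: z_def ypart_def)
      have "xpart v + t = lam *\<^sub>R xpart a + (1 - lam) *\<^sub>R t"
        unfolding veq xpart_diff xk xz by (simp add: algebra_simps)
      also have "\<dots> \<in> D" using convexD[OF assms(2) a'(1) t] lam by simp
      finally have 1: "xpart v + t \<in> D" .
      have "ypart v = ypart (\<theta>1 *\<^sub>R (a v* Di))" unfolding veq ypart_simps yz by simp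
      moreover have "\<theta>1 *\<^sub>R (a v* Di) \<in> K" unfolding K_def using al(1) by blast
      ultimately have "0 < ypart v \<and> ypart v \<le> Yb" using Kb by simp
      then show ?thesis using 1 vl by blast
    qed
    have Fval: "Ffun D M t \<in> ereal ` ypart ` V" if t: "t \<in> D" for t
    proof -
      define S where "S = {y. y > 0 \<and> (\<exists>v \<in> lattice M. ypart v = y \<and> xpart v + t \<in> D)}"
      have S'sub: "S \<inter> {..Yb} \<subseteq> ypart ` V"
        unfolding S_def V_def lattice_glat using t by auto
      then have S'fin: "finite (S \<inter> {..Yb})" using Vfin finite_subset by blast
      have S'ne: "S \<inter> {..Yb} \<noteq> {}" using exist[OF t] unfolding S_def lattice_glat by auto
      define m where "m = Min (S \<inter> {..Yb})"
      have mS: "m \<in> S \<inter> {..Yb}" unfolding m_def using S'fin S'ne by (rule Min_in)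
      have mle: "\<forall>z\<in>S. m \<le> z"
      proof
        fix z assume z: "z \<in> S"
        show "m \<le> z"
        proof (cases "z \<le> Yb")
          case True then show ?thesis unfolding m_def using S'fin z by (intro Min_le) auto
        next
          case False then show ?thesis using mS by auto
        qed
      qed
      have L: "(LEAST y. y \<in> S) = m" using mS mle by (intro Least_equality) auto
      have "Ffun D M t = ereal m"
        unfolding Ffun_def Let_def S_def[symmetric] using mS mle L by auto
      then show ?thesis using mS S'sub by blast
    qed
    have sub: "Ffun D M ` D \<subseteq> ereal ` ypart ` V" using Fval by blast
    have fin: "finite (Ffun D M ` D)" using sub Vfin finite_subset by blast
    have "card (Ffun D M ` D) \<le> card (ereal ` ypart ` V)" using sub Vfin by (intro card_mono) auto
    also have "\<dots> \<le> card V" using card_image_le Vfin by (metis card_image_le finite_imageI le_trans)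
    also have "\<dots> \<le> nat \<lceil>measure lebesgue T\<rceil>"
    proof -
      have "int (card V) \<le> \<lceil>measure lebesgue T\<rceil>" using cardV by (metis ceiling_mono ceiling_of_nat)
      then show ?thesis by linarith
    qed
    finally show "Gcount D M \<le> enat (nat \<lceil>measure lebesgue T\<rceil>)"
      unfolding Gcount_def using fin by simp
  qed
qed

end
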